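(* Let $V:\mathbb{R}^d\to\mathbb{R}^n$ be continuously differentiable and $h$-homogeneous, and suppose there are constants $C,\ell>0$ with $\Vert V(\theta)\Vert_\mu\le C\Vert\theta\Vert^\ell$ for all $\theta$. Let $B=\frac{\Vert (I-\gamma P)V^*\Vert_\mu}{1-\gamma}=\frac{\Vert R\Vert_\mu}{1-\gamma}$. Then for any initial condition $\theta(0)=\theta_0$, if $\theta(t)$ follows the dynamics $$\dot\theta=-\nabla V(\theta)^T A\,(V(\theta)-V^* ),$$ we have $\liminf_{t\to\infty}\Vert V(\theta(t))\Vert_\mu\le B$.
   Context: A Markov reward process has finite state space $\mathcal{S}$ with $|\mathcal{S}|=n$, transition matrix $P$ (entries $P(s'|s)$) defining an irreducible, aperiodic Markov chain with stationary distribution $\mu$, a finite reward function $r(s,s')$, and discount factor $\gamma\in[0,1)$. Let $R\in\mathbb{R}^n$ be $R(s)=\mathbb{E}_{s'\sim P(\cdot|s)}[r(s,s')]$, and let $V^*\in\mathbb{R}^n$ be the true value function, the unique solution of $V^*=R+\gamma PV^*$. Let $D_\mu$ be the diagonal matrix with $\mu$ on the diagonal and $A:=D_\mu(I-\gamma P)$. For $x\in\mathbb{R}^n$, $\Vert x\Vert_\mu^2=x^TD_\mu x=\sum_s\mu(s)x_s^2$; $\Vert\theta\Vert$ is the Euclidean norm. $\nabla V(\theta)$ denotes the $n\times d$ Jacobian of $V$. A differentiable function $f:\mathbb{R}^k\to\mathbb{R}^m$ is called $h$-homogeneous (for $h\in\mathbb{R}$) if $f(x)=h\,\nabla f(x)\,x$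 for all $x$. *)

theory Defs
  imports "HOL-Analysis.Analysis"
begin

text \<open>States are the elements of a finite type 'n; parameters live in real^'d.
  Matrices are real^'n^'n with entry (P $ s $ s') = P(s'|s).\<close>

fun mpow :: "real^'n^'n \<Rightarrow> nat \<Rightarrow> real^'n^'n" where
  "mpow M 0 = mat 1"
| "mpow M (Suc k) = M ** mpow M k"

definition stochastic_matrix :: "real^'n^'n \<Rightarrow> bool" where
  "stochastic_matrix P \<longleftrightarrow> (\<forall>s s'. P $ s $ s' \<ge> 0) \<and> (\<forall>s. (\<Sum>s'\<in>UNIV. P $ s $ s') = 1)"

definition irreducible_chain :: "real^'n^'n \<Rightarrow> bool" where
  "irreducible_chain P \<longleftrightarrow> (\<forall>s s'. \<exists>k>0. mpow P k $ s $ s' > 0)"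

definition period :: "real^'n^'n \<Rightarrow> 'n \<Rightarrow> nat" where
  "period P s = Gcd {k. k > 0 \<and> mpow P k $ s $ s > 0}"

definition aperiodic_chain :: "real^'n^'n \<Rightarrow> bool" where
  "aperiodic_chain P \<longleftrightarrow> (\<forall>s. period P s = 1)"

definition stationary_distribution :: "real^'n^'n \<Rightarrow> real^'n \<Rightarrow> bool" where
  "stationary_distribution P \<mu> \<longleftrightarrow> (\<forall>s. \<mu> $ s \<ge> 0) \<and> (\<Sum>s\<in>UNIV. \<mu> $ s) = 1
     \<and> (\<forall>s'. (\<Sum>s\<in>UNIV. \<mu> $ s * P $ s $ s') = \<mu> $ s')"

definition diag_mat :: "real^'n \<Rightarrow> real^'n^'n" where
  "diag_mat v = (\<chi> i j. if i = j then v $ i else 0)"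

definition mu_norm :: "real^'n \<Rightarrow> real^'n \<Rightarrow> real" where
  "mu_norm \<mu> x = sqrt (\<Sum>s\<in>UNIV. \<mu> $ s * (x $ s)\<^sup>2)"

definition exp_reward :: "real^'n^'n \<Rightarrow> ('n \<Rightarrow> 'n \<Rightarrow> real) \<Rightarrow> real^'n" where
  "exp_reward P r = (\<chi> s. \<Sum>s'\<in>UNIV. P $ s $ s' * r s s')"

end

theory Submission
  imports Defs
begin


lemma mu_cs:
  fixes \<mu> u v :: "real^'n"
  assumes "\<forall>s. \<mu> $ s \<ge> 0"
  shows "\<bar>\<Sum>s\<in>UNIV. \<mu> $ s * u $ s * v $ s\<bar> \<le> mu_norm \<mu> u * mu_norm \<mu> v"
proof -
  have "(\<Sum>s\<in>UNIV. (sqrt (\<mu> $ s) * u $ s) * (sqrt (\<mu> $ s) * v $ s))\<^sup>2 \<le>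
    (\<Sum>s\<in>UNIV. (sqrt (\<mu> $ s) * u $ s)\<^sup>2) * (\<Sum>s\<in>UNIV. (sqrt (\<mu> $ s) * v $ s)\<^sup>2)"
    by (rule Cauchy_Schwarz_ineq_sum)
  moreover have "\<And>s. (sqrt (\<mu> $ s) * u $ s) * (sqrt (\<mu> $ s) * v $ s) = \<mu> $ s * u $ s * v $ s"
    using assms by (simp add: algebra_simps)
  moreover have "\<And>s w. (sqrt (\<mu> $ s) * w $ s)\<^sup>2 = \<mu> $ s * (w $ s)\<^sup>2"
    using assms by (simp add: power_mult_distrib)
  ultimately have "(\<Sum>s\<in>UNIV. \<mu> $ s * u $ s * v $ s)\<^sup>2 \<le> (mu_norm \<mu> u)\<^sup>2 * (mu_norm \<mu> v)\<^sup>2"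
    unfolding mu_norm_def using assms by (simp add: sum_nonneg)
  then have "(\<Sum>s\<in>UNIV. \<mu> $ s * u $ s * v $ s)\<^sup>2 \<le> (mu_norm \<mu> u * mu_norm \<mu> v)\<^sup>2"
    by (simp add: power_mult_distrib)
  moreover have "mu_norm \<mu> u * mu_norm \<mu> v \<ge> 0" unfolding mu_norm_def using assms by (simp add: sum_nonneg)
  ultimately show ?thesis using power2_le_imp_le[of "\<bar>\<Sum>s\<in>UNIV. \<mu> $ s * u $ s * v $ s\<bar>"]
    by (simp only: power2_abs)
qed

lemma mu_sq:
  fixes \<mu> u :: "real^'n"
  assumes "\<forall>s. \<mu> $ s \<ge> 0"
  shows "(\<Sum>s\<in>UNIV. \<mu> $ s * u $ s * u $ s) = (mu_norm \<mu> u)\<^sup>2"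
  unfolding mu_norm_def using assms by (simp add: sum_nonneg power2_eq_square mult.assoc)




lemma P_contract:
  fixes P :: "real^'n^'n" and \<mu> v :: "real^'n"
  assumes stoch: "stochastic_matrix P" and stat: "stationary_distribution P \<mu>"
  shows "mu_norm \<mu> (P *v v) \<le> mu_norm \<mu> v"
proof -
  have mu0: "\<forall>s. \<mu> $ s \<ge> 0" using stat unfolding stationary_distribution_def by auto
  have P0: "\<And>s s'. P $ s $ s' \<ge> 0" and P1: "\<And>s. (\<Sum>s'\<in>UNIV. P $ s $ s') = 1"
    using stoch unfolding stochastic_matrix_def by auto
  have jen: "((P *v v) $ s)\<^sup>2 \<le> (\<Sum>s'\<in>UNIV. P $ s $ s' * (v $ s')\<^sup>2)" for s
  proof -
    have "(\<Sum>s'\<in>UNIV. sqrt (P $ s $ s') * (sqrt (P $ s $ s') * v $ s'))\<^sup>2 \<le>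
      (\<Sum>s'\<in>UNIV. (sqrt (P $ s $ s'))\<^sup>2) * (\<Sum>s'\<in>UNIV. (sqrt (P $ s $ s') * v $ s')\<^sup>2)"
      by (rule Cauchy_Schwarz_ineq_sum)
    moreover have "(\<Sum>s'\<in>UNIV. sqrt (P $ s $ s') * (sqrt (P $ s $ s') * v $ s')) = (P *v v) $ s"
      unfolding matrix_vector_mult_def using P0 by (simp flip: mult.assoc)
    moreover have "(\<Sum>s'\<in>UNIV. (sqrt (P $ s $ s'))\<^sup>2) = 1"
      using P0 P1 by simp
    moreover have "(\<Sum>s'\<in>UNIV. (sqrt (P $ s $ s') * v $ s')\<^sup>2) = (\<Sum>s'\<in>UNIV. P $ s $ s' * (v $ s')\<^sup>2)"
      using P0 by (simp add: power_mult_distrib)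
    ultimately show ?thesis by simp
  qed
  have "(\<Sum>s\<in>UNIV. \<mu> $ s * ((P *v v) $ s)\<^sup>2) \<le> (\<Sum>s\<in>UNIV. \<mu> $ s * (\<Sum>s'\<in>UNIV. P $ s $ s' * (v $ s')\<^sup>2))"
    by (rule sum_mono) (simp add: jen mu0 mult_left_mono)
  also have "\<dots> = (\<Sum>s\<in>UNIV. \<Sum>s'\<in>UNIV. \<mu> $ s * P $ s $ s' * (v $ s')\<^sup>2)"
    by (simp add: sum_distrib_left mult.assoc)
  also have "\<dots> = (\<Sum>s'\<in>UNIV. \<Sum>s\<in>UNIV. \<mu> $ s * P $ s $ s' * (v $ s')\<^sup>2)"
    by (rule sum.swap)
  also have "\<dots> = (\<Sum>s'\<in>UNIV. (\<Sum>s\<in>UNIV. \<mu> $ s * P $ s $ s') * (v $ s')\<^sup>2)"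
    by (simp add: sum_distrib_right)
  also have "\<dots> = (\<Sum>s'\<in>UNIV. \<mu> $ s' * (v $ s')\<^sup>2)"
    using stat unfolding stationary_distribution_def by simp
  finally show ?thesis unfolding mu_norm_def by simp
qed



lemma diag_mult_vec:
  fixes \<mu> :: "real^'n" and M :: "real^'n^'n"
  shows "(diag_mat \<mu> ** M) *v z = (\<chi> s. \<mu> $ s * (M *v z) $ s)"
proof -
  have "((diag_mat \<mu> ** M) *v z) $ i = \<mu> $ i * (M *v z) $ i" for i
  proof -
    have "(diag_mat \<mu> ** M) $ i $ j = \<mu> $ i * M $ i $ j" for j
      unfolding matrix_matrix_mult_def diag_mat_def
      by (simp add: if_distrib if_distribR cong: if_cong)
    then show ?thesis
      by (simp add: matrix_vector_mult_def sum_distrib_left mult.assoc)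
  qed
  then show ?thesis by (simp add: vec_eq_iff)
qed

lemma key_ineq:
  fixes P :: "real^'n^'n" and \<mu> u y :: "real^'n" and \<gamma> :: real
  assumes stoch: "stochastic_matrix P" and stat: "stationary_distribution P \<mu>"
    and g: "0 \<le> \<gamma>"
  shows "inner u ((diag_mat \<mu> ** (mat 1 - \<gamma> *\<^sub>R P)) *v (u - y)) \<ge>
     (1 - \<gamma>) * (mu_norm \<mu> u)\<^sup>2 - mu_norm \<mu> u * mu_norm \<mu> ((mat 1 - \<gamma> *\<^sub>R P) *v y)"
proof -
  have mu0: "\<forall>s. \<mu> $ s \<ge> 0" using stat unfolding stationary_distribution_def by auto
  define M where "M = mat 1 - \<gamma> *\<^sub>R P"
  have Mu: "M *v u = u - \<gamma> *\<^sub>R (P *v u)"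
    unfolding M_def by (simp add: matrix_vector_mult_diff_rdistrib scaleR_matrix_vector_assoc)
  have "inner u ((diag_mat \<mu> ** M) *v (u - y)) = (\<Sum>s\<in>UNIV. \<mu> $ s * u $ s * (M *v (u - y)) $ s)"
    by (simp add: diag_mult_vec inner_vec_def mult.assoc mult.left_commute)
  also have "\<dots> = (\<Sum>s\<in>UNIV. \<mu> $ s * u $ s * u $ s) - \<gamma> * (\<Sum>s\<in>UNIV. \<mu> $ s * u $ s * (P *v u) $ s)
      - (\<Sum>s\<in>UNIV. \<mu> $ s * u $ s * (M *v y) $ s)"
    by (simp add: matrix_vector_mult_diff_distrib Mu algebra_simps sum_subtractf sum_distrib_left sum.distrib)
  finally have eq: "inner u ((diag_mat \<mu> ** M) *v (u - y)) = \<dots>" .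
  have a: "(\<Sum>s\<in>UNIV. \<mu> $ s * u $ s * u $ s) = (mu_norm \<mu> u)\<^sup>2" using mu_sq mu0 by blast
  have b: "(\<Sum>s\<in>UNIV. \<mu> $ s * u $ s * (P *v u) $ s) \<le> (mu_norm \<mu> u)\<^sup>2"
  proof -
    have "(\<Sum>s\<in>UNIV. \<mu> $ s * u $ s * (P *v u) $ s) \<le> mu_norm \<mu> u * mu_norm \<mu> (P *v u)"
      using mu_cs[OF mu0, of u "P *v u"] by linarith
    also have "\<dots> \<le> mu_norm \<mu> u * mu_norm \<mu> u"
      by (rule mult_left_mono[OF P_contract[OF stoch stat]]) (use mu0 in \<open>simp add: mu_norm_def sum_nonneg\<close>)
    finally show ?thesis by (simp add: power2_eq_square)
  qed
  have c: "(\<Sum>s\<in>UNIV. \<mu> $ s * u $ s * (M *v y) $ s) \<le> mu_norm \<mu> u * mu_norm \<mu> (M *v y)"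
    using mu_cs[OF mu0, of u "M *v y"] by linarith
  have "\<gamma> * (\<Sum>s\<in>UNIV. \<mu> $ s * u $ s * (P *v u) $ s) \<le> \<gamma> * (mu_norm \<mu> u)\<^sup>2"
    using mult_left_mono[OF b g] .
  then show ?thesis using eq a c unfolding M_def[symmetric] by (simp add: algebra_simps)
qed



lemma homog_neg:
  fixes V :: "real^'d \<Rightarrow> real^'n" and J :: "real^'d \<Rightarrow> real^'d^'n"
  assumes deriv: "\<And>x. (V has_derivative (\<lambda>v. J x *v v)) (at x)"
    and homog: "\<And>x. V x = h *\<^sub>R (J x *v x)"
    and hneg: "h < 0"
  shows "V x = 0"
proof -
  define k where "k = 1 / h"
  have kneg: "k < 0" using hneg by (simp add: k_def)
  define \<phi> where "\<phi> s = s powr (-k) *\<^sub>R V (s *\<^sub>R x)" for s :: real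
  have Jx: "J (s *\<^sub>R x) *v x = (k / s) *\<^sub>R V (s *\<^sub>R x)" if "s > 0" for s
  proof -
    have "V (s *\<^sub>R x) = h *\<^sub>R (s *\<^sub>R (J (s *\<^sub>R x) *v x))"
      using homog[of "s *\<^sub>R x"] by (simp add: matrix_vector_mult_scaleR)
    then show ?thesis using that hneg by (simp add: k_def)
  qed
  have d: "(\<phi> has_derivative (\<lambda>t. 0)) (at s within {0<..})" if "s \<in> {0<..}" for s
  proof -
    have s0: "s > 0" using that by simp
    have dV: "((\<lambda>s. V (s *\<^sub>R x)) has_derivative (\<lambda>t. J (s *\<^sub>R x) *v (t *\<^sub>R x))) (at s)"
      by (rule has_derivative_compose[OF _ deriv, of "\<lambda>s. s *\<^sub>R x" "\<lambda>t. t *\<^sub>R x", simplified])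
         (intro derivative_eq_intros, auto)
    have dp: "((\<lambda>s. s powr (-k)) has_real_derivative (-k) * s powr (-k - 1)) (at s)"
      using s0 by (intro derivative_eq_intros) auto
    have "(\<phi> has_derivative (\<lambda>t. s powr (-k) *\<^sub>R (J (s *\<^sub>R x) *v (t *\<^sub>R x)) +
        (((-k) * s powr (-k - 1)) * t) *\<^sub>R V (s *\<^sub>R x))) (at s)"
      unfolding \<phi>_def
      by (rule has_derivative_scaleR[OF dp[unfolded has_field_derivative_def] dV])
    moreover have "(\<lambda>t. s powr (-k) *\<^sub>R (J (s *\<^sub>R x) *v (t *\<^sub>R x)) +
        (((-k) * s powr (-k - 1)) * t) *\<^sub>R V (s *\<^sub>R x)) = (\<lambda>t. 0)"
    proof
      fix t
      have "s powr (-k - 1) = s powr (-k) / s" using s0 by (simp add: powr_diff)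
      then show "s powr (-k) *\<^sub>R (J (s *\<^sub>R x) *v (t *\<^sub>R x)) +
        (((-k) * s powr (-k - 1)) * t) *\<^sub>R V (s *\<^sub>R x) = 0"
        using s0 by (simp add: matrix_vector_mult_scaleR Jx)
    qed
    ultimately show ?thesis by (simp add: has_derivative_at_withinI)
  qed
  obtain c where c: "\<forall>s\<in>{0<..}. \<phi> s = c"
    using has_derivative_zero_constant[OF convex_real_interval(3) d] by blast
  have c1: "c = V x" using c[rule_format, of 1] by (simp add: \<phi>_def)
  have V0: "V 0 = 0" using homog[of 0] by simp
  have contV: "continuous_on UNIV V"
    using deriv has_derivative_continuous continuous_at_imp_continuous_on by blast
  have lim1: "((\<lambda>s. V (s *\<^sub>R x)) \<longlongrightarrow> 0) (at_right 0)"
  proof -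
    have "isCont (\<lambda>s. V (s *\<^sub>R x)) 0"
      by (rule isCont_o2[where f="\<lambda>s. s *\<^sub>R x"]) (auto intro: continuous_intros has_derivative_continuous[OF deriv])
    then have "((\<lambda>s. V (s *\<^sub>R x)) \<longlongrightarrow> V (0 *\<^sub>R x)) (at 0)" by (simp add: isCont_def)
    then show ?thesis using V0 by (simp add: filterlim_at_split)
  qed
  have lim2: "((\<lambda>s::real. s powr (-k)) \<longlongrightarrow> 0) (at_right 0)"
  proof (rule tendsto_zero_powrI)
    show "((\<lambda>s::real. s) \<longlongrightarrow> 0) (at_right 0)" by (rule tendsto_ident_at)
    show "((\<lambda>s::real. -k) \<longlongrightarrow> -k) (at_right 0)" by (rule tendsto_const)
    show "\<forall>\<^sub>F s in at_right (0::real). 0 \<le> s"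
      using eventually_at_right_less[of "0::real"] by (auto elim: eventually_mono)
    show "0 < -k" using kneg by simp
  qed
  have "(\<phi> \<longlongrightarrow> 0) (at_right 0)"
    unfolding \<phi>_def using tendsto_scaleR[OF lim2 lim1] by simp
  moreover have "eventually (\<lambda>s. \<phi> s = V x) (at_right 0)"
    using eventually_at_right_less[of "0::real"] c c1 by (auto elim: eventually_mono)
  ultimately have "((\<lambda>s. V x) \<longlongrightarrow> 0) (at_right (0::real))"
    by (rule Lim_transform_eventually)
  then show ?thesis using tendsto_const_iff[OF trivial_limit_at_right_real] by blast
qed



theorem theorem1:
  fixes P :: "real^'n^'n" and \<mu> :: "real^'n" and r :: "'n \<Rightarrow> 'n \<Rightarrow> real"
    and \<gamma> :: real and Vstar :: "real^'n"
    and V :: "real^'d \<Rightarrow> real^'n" and J :: "real^'d \<Rightarrow> real^'d^'n"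
    and h C ell :: real and \<theta> :: "real \<Rightarrow> real^'d" and \<theta>0 :: "real^'d"
  assumes stoch: "stochastic_matrix P"
    and irred: "irreducible_chain P"
    and aper: "aperiodic_chain P"
    and stat: "stationary_distribution P \<mu>"
    and gamma: "0 \<le> \<gamma>" "\<gamma> < 1"
    and Vstar: "Vstar = exp_reward P r + \<gamma> *\<^sub>R (P *v Vstar)"
    and deriv: "\<And>x. (V has_derivative (\<lambda>v. J x *v v)) (at x)"
    and contJ: "continuous_on UNIV J"
    and homog: "\<And>x. V x = h *\<^sub>R (J x *v x)"
    and Cpos: "C > 0" and lpos: "ell > 0"
    and growth: "\<And>x. mu_norm \<mu> (V x) \<le> C * norm x powr ell"
    and init: "\<theta> 0 = \<theta>0"
    and ode: "\<And>t. t \<ge> 0 \<Longrightarrow>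
       (\<theta> has_vector_derivative
          (- (transpose (J (\<theta> t)) *v
               ((diag_mat \<mu> ** (mat 1 - \<gamma> *\<^sub>R P)) *v (V (\<theta> t) - Vstar)))))
        (at t within {0..})"
  shows "Liminf at_top (\<lambda>t. ereal (mu_norm \<mu> (V (\<theta> t))))
           \<le> ereal (mu_norm \<mu> ((mat 1 - \<gamma> *\<^sub>R P) *v Vstar) / (1 - \<gamma>))"
proof -
  define Bn where "Bn = mu_norm \<mu> ((mat 1 - \<gamma> *\<^sub>R P) *v Vstar)"
  define B where "B = Bn / (1 - \<gamma>)"
  have mu0: "\<forall>s. \<mu> $ s \<ge> 0" using stat unfolding stationary_distribution_def by auto
  have Bn0: "Bn \<ge> 0" unfolding Bn_def mu_norm_def using mu0 by (simp add: sum_nonneg)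
  have B0: "B \<ge> 0" unfolding B_def using Bn0 gamma by simp
  define m where "m t = mu_norm \<mu> (V (\<theta> t))" for t
  have m0: "m t \<ge> 0" for t unfolding m_def mu_norm_def using mu0 by (simp add: sum_nonneg)
  show ?thesis
  proof (cases "h > 0")
    case False
    have "V x = 0" for x
    proof (cases "h = 0")
      case True then show ?thesis using homog[of x] by simp
    next
      case False
      then have "h < 0" using \<open>\<not> h > 0\<close> by simp
      then show ?thesis using homog_neg[OF deriv homog] by blast
    qed
    then have "(\<lambda>t. ereal (mu_norm \<mu> (V (\<theta> t)))) = (\<lambda>t. ereal 0)"
      by (simp add: mu_norm_def)
    then show ?thesis using B0 unfolding B_def Bn_def by (simp add: Liminf_const)
  next
    case hpos: True
    show ?thesis
    proof (rule ccontr)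
      assume "\<not> ?thesis"
      then have "ereal B < Liminf at_top (\<lambda>t. ereal (m t))"
        unfolding B_def Bn_def m_def by simp
      then obtain c where c1: "ereal B < ereal c" and c2: "ereal c < Liminf at_top (\<lambda>t. ereal (m t))"
        using ereal_dense2 by blast
      have cB: "B < c" using c1 by simp
      have "eventually (\<lambda>t. ereal c < ereal (m t)) at_top" by (rule less_LiminfD[OF c2])
      then obtain T where T: "\<And>t. t \<ge> T \<Longrightarrow> c < m t"
        by (auto simp: eventually_at_top_linorder)
      define T' where "T' = max T 1"
      define A where "A = diag_mat \<mu> ** (mat 1 - \<gamma> *\<^sub>R P)"
      define Q where "Q t = inner (V (\<theta> t)) (A *v (V (\<theta> t) - Vstar))" for t
      define \<delta> where "\<delta> = (1 - \<gamma>) * (c * (c - B))"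
      have \<delta>pos: "\<delta> > 0" unfolding \<delta>_def using cB B0 gamma by simp
      have Qge: "Q t \<ge> \<delta>" if "t \<ge> T'" for t
      proof -
        have mt: "c < m t" using T that by (simp add: T'_def)
        have "Q t \<ge> (1 - \<gamma>) * (m t)\<^sup>2 - m t * Bn"
          using key_ineq[OF stoch stat gamma(1), of "V (\<theta> t)" Vstar]
          unfolding Q_def A_def m_def Bn_def by simp
        also have "(1 - \<gamma>) * (m t)\<^sup>2 - m t * Bn = (1 - \<gamma>) * (m t * (m t - B))"
          unfolding B_def using gamma by (simp add: field_simps power2_eq_square)
        also have "\<dots> \<ge> \<delta>" unfolding \<delta>_def using gamma cB B0 mt
          by (intro mult_left_mono mult_mono) auto
        finally show ?thesis .
      qed
      define N where "N t = inner (\<theta> t) (\<theta> t)" for t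
      have dN: "(N has_real_derivative (- (2 / h) * Q t)) (at t)" if "t > 0" for t
      proof -
        define dv where "dv = - (transpose (J (\<theta> t)) *v (A *v (V (\<theta> t) - Vstar)))"
        have "(\<theta> has_vector_derivative dv) (at t within {0<..})"
          using ode[of t] that unfolding A_def dv_def
          by (auto intro: has_vector_derivative_within_subset)
        then have d\<theta>: "(\<theta> has_vector_derivative dv) (at t)"
          using that at_within_open[of t "{0<..}"] by simp
        have inn: "inner (\<theta> t) dv = - (1 / h) * Q t"
        proof -
          have "inner (\<theta> t) (transpose (J (\<theta> t)) *v w) = inner (J (\<theta> t) *v \<theta> t) w" for w
            using dot_lmul_matrix[of w "J (\<theta> t)" "\<theta> t"] by (simp add: inner_commute)
          moreover have "J (\<theta> t) *v \<theta> t = (1 / h) *\<^sub>R V (\<theta> t)" using homog[of "\<theta> t"] hpos by simp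
          ultimately show ?thesis unfolding Q_def dv_def by (simp add: inner_minus_right)
        qed
        have "(N has_derivative (\<lambda>x. inner (\<theta> t) (x *\<^sub>R dv) + inner (x *\<^sub>R dv) (\<theta> t))) (at t)"
          unfolding N_def
          by (rule has_derivative_inner[OF d\<theta>[unfolded has_vector_derivative_def] d\<theta>[unfolded has_vector_derivative_def]])
        moreover have "(\<lambda>x. inner (\<theta> t) (x *\<^sub>R dv) + inner (x *\<^sub>R dv) (\<theta> t)) = (\<lambda>x. (- (2 / h) * Q t) * x)"
        proof
          fix x
          have "inner (x *\<^sub>R dv) (\<theta> t) = inner (\<theta> t) (x *\<^sub>R dv)" by (rule inner_commute)
          then show "inner (\<theta> t) (x *\<^sub>R dv) + inner (x *\<^sub>R dv) (\<theta> t) = (- (2 / h) * Q t) * x"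
            by (simp only: inner_scaleR_right inn) (simp add: algebra_simps)
        qed
        ultimately have "(N has_derivative (\<lambda>x. (- (2 / h) * Q t) * x)) (at t)" by (simp only:)
        then show ?thesis unfolding has_field_derivative_def .
      qed
      define g where "g t = N t + (2 * \<delta> / h) * t" for t
      have gdec: "g t \<le> g T'" if "t \<ge> T'" for t
      proof (rule DERIV_nonpos_imp_nonincreasing[OF that])
        fix x assume x: "T' \<le> x" "x \<le> t"
        have "x > 0" using x by (simp add: T'_def)
        have "(g has_real_derivative (- (2 / h) * Q x + 2 * \<delta> / h)) (at x)"
          unfolding g_def using dN[OF \<open>x > 0\<close>] hpos
          by (auto intro!: derivative_eq_intros)
        moreover have "- (2 / h) * Q x + 2 * \<delta> / h \<le> 0"
          using Qge[OF x(1)] hpos by (simp add: field_simps)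
        ultimately show "\<exists>y. (g has_real_derivative y) (at x) \<and> y \<le> 0" by blast
      qed
      define t1 where "t1 = T' + N T' * h / (2 * \<delta>) + 1"
      have NT0: "N T' \<ge> 0" unfolding N_def by simp
      have t1T: "t1 \<ge> T'" unfolding t1_def using NT0 hpos \<delta>pos by simp
      have "N t1 \<le> N T' + (2 * \<delta> / h) * (T' - t1)"
        using gdec[OF t1T] unfolding g_def by (simp add: algebra_simps diff_divide_distrib)
      also have "\<dots> = - (2 * \<delta> / h)"
        unfolding t1_def using hpos \<delta>pos by (simp add: field_simps)
      also have "\<dots> < 0" using hpos \<delta>pos by simp
      finally show False unfolding N_def using inner_ge_zero[of "\<theta> t1"] by linarith
    qed
  qed
qed

end
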